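(* Let $d,a,b$ be positive integers, $r=(d+2b)/d$, $R=(a+d)/d$, with $R\ge3r$, and let $x_1$ be as in the context. Then $\rho:=x_1-r$ satisfies $\rho<\frac{r-1}{2}$.
   Context: For $t\in\mathbb C\setminus\{\pm1,\pm r\}$ let $\Phi(t)=d\log|t+r|-d\log|t-r|+(a+d)(\log|t-1|-\log|t+1|)$. Under $R\ge3r$ there is a unique $x_1\in(r,\infty)$ with $\Phi(x_1)=0$; moreover $\Phi>0$ on $(r,x_1)$ and $\Phi<0$ on $(x_1,\infty)$. *)

theory Defs
  imports Complex_Main
begin

text \<open>The function Phi of the paper, restricted to real arguments t
  (the zero x1 lies on the real axis). Parameters: d, a, r.\<close>
definition Phi :: "real \<Rightarrow> real \<Rightarrow> real \<Rightarrow> real \<Rightarrow> real" where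
  "Phi d a r t = d * ln \<bar>t + r\<bar> - d * ln \<bar>t - r\<bar>
                 + (a + d) * (ln \<bar>t - 1\<bar> - ln \<bar>t + 1\<bar>)"

end

theory Submission imports Defs begin

lemma ln_upper2:
  fixes y :: real assumes "y \<ge> 1" shows "ln y \<le> (y - 1/y)/2"
proof -
  let ?f = "\<lambda>x::real. (x - 1/x)/2 - ln x"
  have "?f 1 \<le> ?f y"
  proof (rule DERIV_nonneg_imp_increasing_open[OF assms])
    fix x :: real assume x: "1 < x" "x < y"
    have "DERIV ?f x :> ((1 + 1/x^2)/2 - 1/x)"
      using x by (auto intro!: derivative_eq_intros simp: power2_eq_square field_simps)
    moreover have "(1 + 1/x^2)/2 - 1/x = (x-1)^2/(2*x^2)"
      using x by (simp add: field_simps power2_eq_square)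
    moreover have "(x-1)^2/(2*x^2) \<ge> 0" by simp
    ultimately show "\<exists>d. DERIV ?f x :> d \<and> d \<ge> 0" by metis
  next
    show "continuous_on {1..y} ?f"
      by (intro continuous_intros) auto
  qed
  thus ?thesis by simp
qed

lemma ln_lower2:
  fixes y :: real assumes "y \<ge> 1" shows "ln y \<ge> 2*(y - 1)/(y+1)"
proof -
  let ?f = "\<lambda>x::real. ln x - 2*(x - 1)/(x+1)"
  have "?f 1 \<le> ?f y"
  proof (rule DERIV_nonneg_imp_increasing_open[OF assms])
    fix x :: real assume x: "1 < x" "x < y"
    have "DERIV ?f x :> (1/x - 4/(x+1)^2)"
      using x by (auto intro!: derivative_eq_intros simp: power2_eq_square field_simps)
    moreover have "1/x - 4/(x+1)^2 = (x-1)^2/(x*(x+1)^2)"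
    proof -
      have h: "x \<noteq> 0" "x + 1 \<noteq> 0" using x by auto
      show ?thesis using h by (simp add: divide_simps) (simp add: power2_eq_square algebra_simps)
    qed
    moreover have "(x-1)^2/(x*(x+1)^2) \<ge> 0" using x by simp
    ultimately show "\<exists>d. DERIV ?f x :> d \<and> d \<ge> 0" by metis
  next
    show "continuous_on {1..y} ?f"
      by (intro continuous_intros) auto
  qed
  thus ?thesis by simp
qed

theorem lemma4p10:
  fixes d a b :: nat and r R x1 :: real
  assumes "d > 0" and "a > 0" and "b > 0"
    and "r = (real d + 2 * real b) / real d"
    and "R = (real a + real d) / real d"
    and "R \<ge> 3 * r"
    and "x1 > r" and "Phi (real d) (real a) r x1 = 0"
  shows "x1 - r < (r - 1) / 2"
proof (rule ccontr)
  assume nc: "\<not> ?thesis"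
  define t where "t = x1"
  have tge: "t \<ge> (3*r - 1)/2" using nc t_def by simp
  have r1: "r > 1"
  proof -
    have "r = 1 + 2 * real b / real d" using assms(1,4) by (simp add: field_simps)
    moreover have "2 * real b / real d > 0" using assms(1,3) by simp
    ultimately show ?thesis by simp
  qed
  have tr: "t > r" using assms(7) t_def by simp
  define L where "L = ln ((t+1)/(t-1))"
  define M where "M = ln ((t+r)/(t-r))"
  have dpos: "real d > 0" using assms(1) by simp
  have eq0: "real d * M = (real a + real d) * L"
  proof -
    have "real d * ln (t + r) - real d * ln (t - r) + (real a + real d) * (ln (t - 1) - ln (t + 1)) = 0"
      using assms(8) tr r1 by (simp add: Phi_def t_def)
    moreover have "M = ln (t+r) - ln (t-r)" unfolding M_def using tr r1 by (simp add: ln_div)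
    moreover have "L = ln (t+1) - ln (t-1)" unfolding L_def using tr r1 by (simp add: ln_div)
    ultimately show ?thesis by (simp only: right_diff_distrib)
  qed
  have MRL: "M = R * L"
  proof -
    have "R * real d = real a + real d" using assms(5) dpos by (simp add: field_simps)
    hence "real d * M = real d * (R * L)" using eq0 by (metis mult.assoc mult.commute)
    thus ?thesis using dpos by simp
  qed
  have Lpos: "L > 0" unfolding L_def using tr r1 by simp
  have RL: "R * L \<ge> 3 * r * L" using assms(6) Lpos by (simp add: mult_right_mono)
  have key: "M < 3 * r * L"
  proof (cases "r \<le> 2")
    case True
    have poly: "(3 - r) * t^2 > 3*r - 1"
    proof -
      have "(3*r-1)*(3-r) > 4" using r1 True
      proof -
        have "(3*r-1)*(3-r) - 4 = (3*r - 7)*(1 - r)" by (simp add: algebra_simps)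
        moreover have "(3*r - 7)*(1 - r) > 0" using r1 True by (intro mult_neg_neg) auto
        ultimately show ?thesis by simp
      qed
      moreover have "t^2 \<ge> ((3*r-1)/2)^2" using tge r1 by (intro power_mono) auto
      moreover have "3 - r > 0" using True by simp
      ultimately have "(3-r)*t^2 \<ge> (3-r)*((3*r-1)/2)^2" by (simp add: mult_left_mono)
      moreover have "(3-r)*((3*r-1)/2)^2 > 3*r-1"
      proof -
        have e: "(3-r)*((3*r-1)/2)^2 = (3*r-1) * ((3*r-1)*(3-r)/4)"
          by (simp add: power_divide power2_eq_square)
        have g1: "(3*r-1)*(3-r)/4 > 1" using \<open>(3*r-1)*(3-r) > 4\<close> by simp
        have g2: "3*r - 1 > 0" using r1 by simp
        have g: "(3*r-1)*1 < (3*r-1)*((3*r-1)*(3-r)/4)"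
          by (rule mult_strict_left_mono[OF g1 g2])
        show ?thesis unfolding e using g by simp
      qed
      ultimately show ?thesis by simp
    qed
    have ineq: "(t+r)/(t-r) < ((t+1)/(t-1))^3"
    proof -
      have "(t+1)^3*(t-r) - (t+r)*(t-1)^3 = 2*t*((3-r)*t^2 + 1 - 3*r)"
        by (simp add: power2_eq_square power3_eq_cube algebra_simps)
      moreover have "2*t*((3-r)*t^2 + 1 - 3*r) > 0" using poly tr r1 by simp
      ultimately have "(t+r)*(t-1)^3 < (t+1)^3*(t-r)" by simp
      moreover have "t - r > 0" "t - 1 > 0" using tr r1 by auto
      ultimately show ?thesis by (simp add: divide_simps power_divide)
    qed
    have "M < ln (((t+1)/(t-1))^3)" unfolding M_def
      using ineq tr r1 by (subst ln_less_cancel_iff) auto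
    also have "\<dots> = 3 * L" unfolding L_def using tr r1 by (simp add: ln_realpow)
    also have "\<dots> \<le> 3 * r * L" using Lpos r1 by simp
    finally show ?thesis .
  next
    case False
    have Y1: "(t+r)/(t-r) \<ge> 1" using tr r1 by simp
    have "M \<le> ((t+r)/(t-r) - 1/((t+r)/(t-r)))/2" unfolding M_def by (rule ln_upper2[OF Y1])
    also have "\<dots> = 2*r*t/(t^2 - r^2)"
    proof -
      have "t^2 > r^2" using tr r1 by (intro power_strict_mono) auto
      hence "t * t \<noteq> r * r" by (simp add: power2_eq_square)
      thus ?thesis using tr r1
        by (simp add: divide_simps power2_eq_square) (simp add: algebra_simps)
    qed
    also have "\<dots> < 6*r/t"
    proof -
      have "t \<ge> 5*r/4" using tge False by simp
      hence "t^2 \<ge> (5*r/4)^2" using r1 by (intro power_mono) auto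
      hence "2*t^2 > 3*r^2"
      proof -
        assume "t^2 \<ge> (5*r/4)^2"
        moreover have "r^2 > 0" using r1 by simp
        moreover have "(5*r/4)^2 = 25/16 * r^2" by (simp add: power_divide power2_eq_square)
        ultimately show ?thesis by linarith
      qed
      moreover have "t^2 - r^2 > 0" using tr r1 proof -
        have "t^2 > r^2" using tr r1 by (intro power_strict_mono) auto
        thus ?thesis by simp
      qed
      moreover have "t > 0" "r > 0" using tr r1 by auto
      ultimately show ?thesis
      proof -
        assume h: "2*t^2 > 3*r^2" "t^2 - r^2 > 0" "t > 0" "r > 0"
        have "6*r*(t^2-r^2) - 2*r*t*t = 2*r*(2*t^2 - 3*r^2)" by (simp add: power2_eq_square algebra_simps)
        moreover have "2*r*(2*t^2 - 3*r^2) > 0" using h by simp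
        ultimately have "2*r*t*t < 6*r*(t^2-r^2)" by simp
        thus ?thesis using h by (simp add: divide_simps)
      qed
    qed
    also have "\<dots> \<le> 3 * r * L"
    proof -
      have X1: "(t+1)/(t-1) \<ge> 1" using tr r1 by simp
      have "L \<ge> 2*((t+1)/(t-1) - 1)/((t+1)/(t-1)+1)" unfolding L_def by (rule ln_lower2[OF X1])
      also have "2*((t+1)/(t-1) - 1)/((t+1)/(t-1)+1) = 2/t" using tr r1
        by (simp add: divide_simps)
      finally have "L \<ge> 2/t" .
      hence "3*r*L \<ge> 3*r*(2/t)" using r1 by (intro mult_left_mono) auto
      thus ?thesis by simp
    qed
    finally show ?thesis .
  qed
  show False using key MRL RL by simp
qed

end
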